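(* The construction of a triangle from the feet of its internal angle bisectors by compass and straightedge is impossible in general. Precisely: there exists a triangle $ABC$ in the Euclidean plane such that no compass-and-straightedge construction starting from the points $A$, $B$, $C$ produces the vertices of a triangle $A'B'C'$ whose internal angle bisectors are the segments $A'A$, $B'B$, $C'C$ (that is, $A$ lies on segment $B'C'$ with $A'A$ bisecting angle $B'A'C'$, $B$ lies on segment $C'A'$ with $B'B$ bisecting angle $C'B'A'$, and $C$ lies on segment $A'B'$ with $C'C$ bisecting angle $A'C'B'$).
   Context: Compass-and-straightedge constructibility is meant in the classical sense: starting from the given points $A$, $B$, $C$, one may draw lines through two already constructed points and circles with an already constructed center passing through an already constructed point, and add intersection points of these lines and circles as newly constructed points. *)

theory Defs
  imports "HOL-Analysis.Analysis"
begin

definition line_through :: "complex \<Rightarrow> complex \<Rightarrow> complex set" where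
  "line_through p q = {z. \<exists>t::real. z = p + of_real t * (q - p)}"

definition circle_through :: "complex \<Rightarrow> complex \<Rightarrow> complex set" where
  "circle_through c r = {z. dist z c = dist r c}"

inductive_set constructible :: "complex set \<Rightarrow> complex set" for S where
  base: "z \<in> S \<Longrightarrow> z \<in> constructible S"
| line_line: "\<lbrakk>a \<in> constructible S; b \<in> constructible S; c \<in> constructible S;
     d \<in> constructible S; a \<noteq> b; c \<noteq> d; line_through a b \<noteq> line_through c d;
     z \<in> line_through a b; z \<in> line_through c d\<rbrakk> \<Longrightarrow> z \<in> constructible S"
| line_circle: "\<lbrakk>a \<in> constructible S; b \<in> constructible S; c \<in> constructible S;
     r \<in> constructible S; a \<noteq> b; c \<noteq> r;
     z \<in> line_through a b; z \<in> circle_through c r\<rbrakk> \<Longrightarrow> z \<in> constructible S"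
| circle_circle: "\<lbrakk>c1 \<in> constructible S; r1 \<in> constructible S; c2 \<in> constructible S;
     r2 \<in> constructible S; c1 \<noteq> r1; c2 \<noteq> r2;
     circle_through c1 r1 \<noteq> circle_through c2 r2;
     z \<in> circle_through c1 r1; z \<in> circle_through c2 r2\<rbrakk> \<Longrightarrow> z \<in> constructible S"

definition vangle :: "complex \<Rightarrow> complex \<Rightarrow> real" where
  "vangle u v = arccos ((u \<bullet> v) / (norm u * norm v))"

definition angle :: "complex \<Rightarrow> complex \<Rightarrow> complex \<Rightarrow> real" where
  "angle X P Y = vangle (X - P) (Y - P)"

definition is_triangle :: "complex \<Rightarrow> complex \<Rightarrow> complex \<Rightarrow> bool" where
  "is_triangle A B C \<longleftrightarrow> \<not> collinear {A, B, C}"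

definition bisector_feet ::
  "complex \<Rightarrow> complex \<Rightarrow> complex \<Rightarrow> complex \<Rightarrow> complex \<Rightarrow> complex \<Rightarrow> bool" where
  "bisector_feet A' B' C' A B C \<longleftrightarrow>
     is_triangle A' B' C' \<and>
     A \<in> closed_segment B' C' \<and> angle B' A' A = angle A A' C' \<and>
     B \<in> closed_segment C' A' \<and> angle C' B' B = angle B B' A' \<and>
     C \<in> closed_segment A' B' \<and> angle A' C' C = angle C C' B'"

end

theory Submission
  imports Defs "HOL-Number_Theory.Cong"
begin

definition adj :: "complex set \<Rightarrow> complex \<Rightarrow> complex set" where
  "adj K r = {x + y * r | x y. x \<in> K \<and> y \<in> K}"

fun tw :: "complex set \<Rightarrow> complex list \<Rightarrow> complex set" where
  "tw K [] = K"
| "tw K (r # rs) = tw (adj K r) rs"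

fun valid :: "complex set \<Rightarrow> complex list \<Rightarrow> bool" where
  "valid K [] = True"
| "valid K (r # rs) = (r * r \<in> K \<and> valid (adj K r) rs)"

definition subfield :: "complex set \<Rightarrow> bool" where
  "subfield K \<longleftrightarrow> 0 \<in> K \<and> 1 \<in> K \<and> (\<forall>x\<in>K. \<forall>y\<in>K. x + y \<in> K \<and> x * y \<in> K)
     \<and> (\<forall>x\<in>K. - x \<in> K \<and> inverse x \<in> K)"

lemma subfieldD:
  assumes "subfield K"
  shows "0 \<in> K" "1 \<in> K" "x \<in> K \<Longrightarrow> y \<in> K \<Longrightarrow> x + y \<in> K"
    "x \<in> K \<Longrightarrow> y \<in> K \<Longrightarrow> x * y \<in> K" "x \<in> K \<Longrightarrow> - x \<in> K"
    "x \<in> K \<Longrightarrow> inverse x \<in> K"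
  using assms unfolding subfield_def by auto

lemma subfield_diff: "subfield K \<Longrightarrow> x \<in> K \<Longrightarrow> y \<in> K \<Longrightarrow> x - y \<in> K"
  by (metis diff_conv_add_uminus subfieldD(3,5))

lemma subfield_divide: "subfield K \<Longrightarrow> x \<in> K \<Longrightarrow> y \<in> K \<Longrightarrow> x / y \<in> K"
  by (simp add: divide_inverse subfieldD(4,6))

lemma subfield_power: "subfield K \<Longrightarrow> x \<in> K \<Longrightarrow> x ^ n \<in> K"
  by (induction n) (auto intro: subfieldD)

lemma subset_adj: "subfield K \<Longrightarrow> K \<subseteq> adj K r"
  unfolding adj_def using subfieldD(1) by force

lemma r_in_adj: "subfield K \<Longrightarrow> r \<in> adj K r"
  unfolding adj_def using subfieldD(1,2) by force

lemma adj_mono: "K \<subseteq> L \<Longrightarrow> adj K r \<subseteq> adj L r"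
  unfolding adj_def by blast

lemma subfield_adj:
  assumes K: "subfield K" and r: "r * r \<in> K"
  shows "subfield (adj K r)"
proof -
  note S = subfieldD[OF K] subfield_diff[OF K] subfield_divide[OF K]
  have cl: "x + y * r \<in> adj K r" if "x \<in> K" "y \<in> K" for x y
    using that unfolding adj_def by blast
  have inv: "inverse z \<in> adj K r" if z: "z \<in> adj K r" for z
  proof -
    obtain x y where xy: "z = x + y * r" "x \<in> K" "y \<in> K" using z unfolding adj_def by blast
    define N where "N = x * x - y * y * (r * r)"
    have NK: "N \<in> K" unfolding N_def using xy r S by simp
    show ?thesis
    proof (cases "N = 0")
      case False
      have e: "(x + y*r)*(x - y*r) = N" by (simp add: N_def algebra_simps)
      have nz: "x - y * r \<noteq> 0" "x + y * r \<noteq> 0" using False e by auto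
      have "inverse z = (x - y*r) / N"
        using nz unfolding xy(1) e[symmetric] by (simp add: divide_simps)
      also have "\<dots> = x / N + (- y / N) * r" by (simp add: diff_divide_distrib)
      finally have iz: "inverse z = x / N + (- y / N) * r" .
      have "x / N \<in> K" "- y / N \<in> K" using S NK xy by auto
      from cl[OF this] show ?thesis unfolding iz .
    next
      case True
      show ?thesis
      proof (cases "y = 0")
        case True
        then have "z \<in> K" using xy by simp
        then have "inverse z \<in> K" using S by simp
        then show ?thesis using subset_adj[OF K] by blast
      next
        case False
        have "(r - x / y) * (r + x / y) = 0"
          using True False unfolding N_def by (simp add: field_simps)
        then have "r = x / y \<or> r = - (x / y)" by (simp add: eq_neg_iff_add_eq_0)
        then have "r \<in> K" using S xy by auto
        then have "z \<in> K" using xy S by simp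
        then have "inverse z \<in> K" using S by simp
        then show ?thesis using subset_adj[OF K] by blast
      qed
    qed
  qed
  show ?thesis unfolding subfield_def
  proof (intro conjI ballI)
    show "0 \<in> adj K r" "1 \<in> adj K r" using subset_adj[OF K] S by auto
  next
    fix z w assume z: "z \<in> adj K r" and w: "w \<in> adj K r"
    obtain x y where xy: "z = x + y * r" "x \<in> K" "y \<in> K" using z unfolding adj_def by blast
    obtain x' y' where xy': "w = x' + y' * r" "x' \<in> K" "y' \<in> K" using w unfolding adj_def by blast
    have e1: "z + w = (x + x') + (y + y') * r" using xy xy' by (simp add: algebra_simps)
    have m1: "(x + x') + (y + y') * r \<in> adj K r" by (intro cl subfieldD(3,4)[OF K] xy xy')
    show "z + w \<in> adj K r" by (simp only: e1 m1)
    have e2: "z * w = (x * x' + y * y' * (r * r)) + (x * y' + y * x') * r"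
      using xy xy' by (simp add: algebra_simps)
    have m2: "(x * x' + y * y' * (r * r)) + (x * y' + y * x') * r \<in> adj K r"
      by (intro cl subfieldD(3,4)[OF K] xy xy' r)
    show "z * w \<in> adj K r" by (simp only: e2 m2)
  next
    fix z assume z: "z \<in> adj K r"
    obtain x y where xy: "z = x + y * r" "x \<in> K" "y \<in> K" using z unfolding adj_def by blast
    have e3: "- z = (- x) + (- y) * r" using xy by simp
    have m3: "(- x) + (- y) * r \<in> adj K r" by (intro cl subfieldD(5)[OF K] xy)
    show "- z \<in> adj K r" by (simp only: e3 m3)
    show "inverse z \<in> adj K r" using inv z .
  qed
qed

lemma tw_append: "tw K (ps @ qs) = tw (tw K ps) qs"
  by (induction ps arbitrary: K) auto

lemma valid_append: "valid K (ps @ qs) \<longleftrightarrow> valid K ps \<and> valid (tw K ps) qs"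
  by (induction ps arbitrary: K) auto

lemma tw_mono: "K \<subseteq> L \<Longrightarrow> tw K rs \<subseteq> tw L rs"
  by (induction rs arbitrary: K L) (auto dest: adj_mono[of _ _ ])

lemma valid_mono: "K \<subseteq> L \<Longrightarrow> valid K rs \<Longrightarrow> valid L rs"
  by (induction rs arbitrary: K L) (auto dest: adj_mono)

lemma subfield_tw: "subfield K \<Longrightarrow> valid K rs \<Longrightarrow> subfield (tw K rs)"
  by (induction rs arbitrary: K) (auto intro: subfield_adj)

lemma subset_tw: "subfield K \<Longrightarrow> valid K rs \<Longrightarrow> K \<subseteq> tw K rs"
proof (induction rs arbitrary: K)
  case Nil then show ?case by simp
next
  case (Cons r rs)
  then have "adj K r \<subseteq> tw (adj K r) rs" using subfield_adj by auto
  then show ?case using subset_adj[OF Cons.prems(1)] by auto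
qed

definition cp :: "complex set \<Rightarrow> complex \<Rightarrow> complex \<Rightarrow> complex \<Rightarrow> bool" where
  "cp K r z1 z2 \<longleftrightarrow> (\<exists>A\<in>K. \<exists>B\<in>K. z1 = A + B * r \<and> z2 = A - B * r)"

lemma cp_const: "subfield K \<Longrightarrow> a \<in> K \<Longrightarrow> cp K r a a"
  unfolding cp_def using subfieldD(1) by force

lemma cp_base: "x \<in> K \<Longrightarrow> y \<in> K \<Longrightarrow> cp K r (x + y * r) (x - y * r)"
  unfolding cp_def by blast

lemma cp_add:
  assumes K: "subfield K" and "cp K r z1 z2" "cp K r w1 w2"
  shows "cp K r (z1 + w1) (z2 + w2)"
proof -
  obtain A B where AB: "A \<in> K" "B \<in> K" "z1 = A + B * r" "z2 = A - B * r"
    using assms(2) unfolding cp_def by blast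
  obtain A' B' where AB': "A' \<in> K" "B' \<in> K" "w1 = A' + B' * r" "w2 = A' - B' * r"
    using assms(3) unfolding cp_def by blast
  have "z1 + w1 = (A + A') + (B + B') * r" "z2 + w2 = (A + A') - (B + B') * r"
    unfolding AB(3,4) AB'(3,4) by (simp_all add: algebra_simps)
  moreover have "A + A' \<in> K" "B + B' \<in> K" using AB AB' subfieldD(3)[OF K] by auto
  ultimately show ?thesis unfolding cp_def by blast
qed

lemma cp_mult:
  assumes K: "subfield K" and r: "r * r \<in> K" and "cp K r z1 z2" "cp K r w1 w2"
  shows "cp K r (z1 * w1) (z2 * w2)"
proof -
  obtain A B where AB: "A \<in> K" "B \<in> K" "z1 = A + B * r" "z2 = A - B * r"
    using assms(3) unfolding cp_def by blast
  obtain A' B' where AB': "A' \<in> K" "B' \<in> K" "w1 = A' + B' * r" "w2 = A' - B' * r"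
    using assms(4) unfolding cp_def by blast
  have "z1 * w1 = (A * A' + B * B' * (r * r)) + (A * B' + B * A') * r"
       "z2 * w2 = (A * A' + B * B' * (r * r)) - (A * B' + B * A') * r"
    unfolding AB(3,4) AB'(3,4) by (simp_all add: algebra_simps)
  moreover have "A * A' + B * B' * (r * r) \<in> K" "A * B' + B * A' \<in> K"
    by (intro subfieldD(3,4)[OF K] AB AB' r)+
  ultimately show ?thesis unfolding cp_def by blast
qed

lemma cp_power:
  assumes K: "subfield K" and r: "r * r \<in> K" and "cp K r z1 z2"
  shows "cp K r (z1 ^ n) (z2 ^ n)"
  by (induction n) (auto intro: cp_mult[OF K r] cp_const[OF K] subfieldD(2)[OF K] assms(3))

lemma cp_zero:
  assumes K: "subfield K" and rK: "r \<notin> K" and "cp K r z1 z2" and "z1 = 0"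
  shows "z2 = 0"
proof -
  obtain A B where AB: "A \<in> K" "B \<in> K" "z1 = A + B * r" "z2 = A - B * r"
    using assms(3) unfolding cp_def by blast
  have "B = 0"
  proof (rule ccontr)
    assume "B \<noteq> 0"
    then have "r = - A / B" using AB assms(4) by (simp add: field_simps add_eq_0_iff)
    then have "r \<in> K" using AB subfield_divide[OF K] subfieldD(5)[OF K] by auto
    then show False using rK by simp
  qed
  then show ?thesis using AB assms(4) by simp
qed

definition P3 :: "complex \<Rightarrow> complex \<Rightarrow> complex \<Rightarrow> complex \<Rightarrow> complex" where
  "P3 c2 c1 c0 z = z ^ 3 + c2 * z ^ 2 + c1 * z + c0"

definition P4 :: "complex \<Rightarrow> complex \<Rightarrow> complex \<Rightarrow> complex \<Rightarrow> complex \<Rightarrow> complex" where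
  "P4 p3 p2 p1 p0 z = z ^ 4 + p3 * z ^ 3 + p2 * z ^ 2 + p1 * z + p0"

lemma cp_P3:
  assumes K: "subfield K" and r: "r * r \<in> K" and c: "c2 \<in> K" "c1 \<in> K" "c0 \<in> K"
    and "cp K r z1 z2"
  shows "cp K r (P3 c2 c1 c0 z1) (P3 c2 c1 c0 z2)"
  unfolding P3_def
  by (intro cp_add[OF K] cp_mult[OF K r] cp_power[OF K r] cp_const[OF K] c assms(6))

lemma cp_P4:
  assumes K: "subfield K" and r: "r * r \<in> K" and c: "p3 \<in> K" "p2 \<in> K" "p1 \<in> K" "p0 \<in> K"
    and "cp K r z1 z2"
  shows "cp K r (P4 p3 p2 p1 p0 z1) (P4 p3 p2 p1 p0 z2)"
  unfolding P4_def
  by (intro cp_add[OF K] cp_mult[OF K r] cp_power[OF K r] cp_const[OF K] c assms(7))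

lemma conj_root:
  assumes K: "subfield K" and r: "r * r \<in> K" and z: "z \<in> adj K r" and zK: "z \<notin> K"
  obtains x y where "x \<in> K" "y \<in> K" "z = x + y * r" "r \<notin> K" "y \<noteq> 0" "x + y * r \<noteq> x - y * r"
proof -
  obtain x y where xy: "z = x + y * r" "x \<in> K" "y \<in> K" using z unfolding adj_def by blast
  have rK: "r \<notin> K"
  proof
    assume "r \<in> K" then have "z \<in> K" using xy subfieldD(3,4)[OF K] by auto
    then show False using zK by simp
  qed
  have y0: "y \<noteq> 0" using xy zK by auto
  have r0: "r \<noteq> 0" using rK subfieldD(1)[OF K] by auto
  have "x + y * r \<noteq> x - y * r" using y0 r0 by simp
  then show ?thesis using that xy rK y0 by blast
qed

lemma cubic_adj:
  assumes K: "subfield K" and r: "r * r \<in> K" and c: "c2 \<in> K" "c1 \<in> K" "c0 \<in> K"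
    and nr: "\<forall>z\<in>K. P3 c2 c1 c0 z \<noteq> 0"
  shows "\<forall>z\<in>adj K r. P3 c2 c1 c0 z \<noteq> 0"
proof (intro ballI notI)
  fix z assume z: "z \<in> adj K r" and root: "P3 c2 c1 c0 z = 0"
  have zK: "z \<notin> K" using nr root by auto
  obtain x y where xy: "x \<in> K" "y \<in> K" "z = x + y * r" "r \<notin> K" "y \<noteq> 0"
     and uv: "x + y * r \<noteq> x - y * r"
    using conj_root[OF K r z zK] by blast
  define u where "u = x + y * r"
  define v where "v = x - y * r"
  have Pu: "P3 c2 c1 c0 u = 0" using root xy u_def by simp
  have Pv: "P3 c2 c1 c0 v = 0"
    using cp_zero[OF K xy(4) cp_P3[OF K r c cp_base[OF xy(1,2)]]] Pu u_def v_def by simp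
  define Q where "Q = u ^ 2 + u * v + v ^ 2 + c2 * (u + v) + c1"
  have "P3 c2 c1 c0 u - P3 c2 c1 c0 v = (u - v) * Q"
    unfolding P3_def Q_def by (simp add: algebra_simps power2_eq_square power3_eq_cube)
  then have Q0: "Q = 0" using Pu Pv uv u_def v_def by simp
  define w where "w = - c2 - 2 * x"
  have wK: "w \<in> K" unfolding w_def
    using subfield_diff[OF K] subfieldD(4,5)[OF K] c xy subfieldD(3)[OF K] subfieldD(2)[OF K]
    by (metis mult_2)
  have "P3 c2 c1 c0 w = P3 c2 c1 c0 u + (w - u) * Q"
    unfolding P3_def Q_def w_def u_def v_def
    by (simp add: algebra_simps power2_eq_square power3_eq_cube)
  then have "P3 c2 c1 c0 w = 0" using Pu Q0 by simp
  then show False using nr wK by auto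
qed

definition R3 :: "complex \<Rightarrow> complex \<Rightarrow> complex \<Rightarrow> complex \<Rightarrow> complex \<Rightarrow> complex" where
  "R3 p3 p2 p1 p0 = P3 (- p2) (p1 * p3 - 4 * p0) (- (p1^2 + p0 * p3^2 - 4 * p0 * p2))"

lemma quartic_adj:
  assumes K: "subfield K" and r: "r * r \<in> K" and c: "p3 \<in> K" "p2 \<in> K" "p1 \<in> K" "p0 \<in> K"
    and nr: "\<forall>z\<in>K. P4 p3 p2 p1 p0 z \<noteq> 0" and nrr: "\<forall>z\<in>K. R3 p3 p2 p1 p0 z \<noteq> 0"
  shows "\<forall>z\<in>adj K r. P4 p3 p2 p1 p0 z \<noteq> 0"
proof (intro ballI notI)
  note S = subfieldD[OF K] subfield_diff[OF K]
  fix z assume z: "z \<in> adj K r" and root: "P4 p3 p2 p1 p0 z = 0"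
  have zK: "z \<notin> K" using nr root by auto
  obtain x y where xy: "x \<in> K" "y \<in> K" "z = x + y * r" "r \<notin> K" "y \<noteq> 0"
     and uv: "x + y * r \<noteq> x - y * r"
    using conj_root[OF K r z zK] by blast
  define u where "u = x + y * r"
  define v where "v = x - y * r"
  have Pu: "P4 p3 p2 p1 p0 u = 0" using root xy u_def by simp
  have Pv: "P4 p3 p2 p1 p0 v = 0"
    using cp_zero[OF K xy(4) cp_P4[OF K r c cp_base[OF xy(1,2)]]] Pu u_def v_def by simp
  define s where "s = - (2 * x)"
  define m where "m = x * x - y * y * (r * r)"
  define s2 where "s2 = p3 - s"
  define m2 where "m2 = p2 - m - s * s2"
  define R1 where "R1 = p1 - (s * m2 + s2 * m)"
  define R0 where "R0 = p0 - m * m2"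
  have sK: "s \<in> K" unfolding s_def using S xy by (metis mult_2)
  have mK: "m \<in> K" unfolding m_def using S xy r by metis
  have s2K: "s2 \<in> K" unfolding s2_def using S sK c by metis
  have m2K: "m2 \<in> K" unfolding m2_def using S sK mK s2K c by metis
  have R1K: "R1 \<in> K" unfolding R1_def using S sK mK s2K m2K c by metis
  have R0K: "R0 \<in> K" unfolding R0_def using S sK mK s2K m2K c by metis
  have ident: "P4 p3 p2 p1 p0 t = (t^2 + s * t + m) * (t^2 + s2 * t + m2) + R1 * t + R0" for t
    unfolding P4_def R1_def R0_def m2_def s2_def
    by (simp add: algebra_simps power2_eq_square power3_eq_cube power4_eq_xxxx)
  have qu: "u^2 + s * u + m = 0" unfolding u_def s_def m_def by (simp add: algebra_simps power2_eq_square)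
  have qv: "v^2 + s * v + m = 0" unfolding v_def s_def m_def by (simp add: algebra_simps power2_eq_square)
  have lu: "R1 * u + R0 = 0" using ident[of u] Pu qu by simp
  have lv: "R1 * v + R0 = 0" using ident[of v] Pv qv by simp
  have "R1 * (u - v) = (R1 * u + R0) - (R1 * v + R0)" by (simp add: algebra_simps)
  also have "\<dots> = 0" using lu lv by simp
  finally have "R1 * (u - v) = 0" .
  moreover have "u - v \<noteq> 0" using uv u_def v_def by simp
  ultimately have R10: "R1 = 0" by simp
  then have R00: "R0 = 0" using lu by simp
  have "R3 p3 p2 p1 p0 (m + m2) = 0"
  proof -
    have e3: "p3 = s + s2" unfolding s2_def by simp
    have e2: "p2 = m + m2 + s * s2" unfolding m2_def by simp
    have e1: "p1 = s * m2 + s2 * m" using R10 unfolding R1_def by simp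
    have e0: "p0 = m * m2" using R00 unfolding R0_def by simp
    show ?thesis unfolding R3_def P3_def e3 e2 e1 e0
      by (simp add: algebra_simps power2_eq_square power3_eq_cube)
  qed
  moreover have "m + m2 \<in> K" using S mK m2K by metis
  ultimately show False using nrr by auto
qed

lemma tower_noroot:
  assumes "subfield K" "valid K rs" "p3 \<in> K" "p2 \<in> K" "p1 \<in> K" "p0 \<in> K"
    "\<forall>z\<in>K. P4 p3 p2 p1 p0 z \<noteq> 0" "\<forall>z\<in>K. R3 p3 p2 p1 p0 z \<noteq> 0"
  shows "\<forall>z\<in>tw K rs. P4 p3 p2 p1 p0 z \<noteq> 0"
  using assms
proof (induction rs arbitrary: K)
  case Nil then show ?case by simp
next
  case (Cons r rs)
  have K: "subfield K" and r: "r * r \<in> K" and v: "valid (adj K r) rs" using Cons.prems by auto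
  have sub: "K \<subseteq> adj K r" using subset_adj[OF K] .
  have n1: "\<forall>z\<in>adj K r. P4 p3 p2 p1 p0 z \<noteq> 0"
    using quartic_adj[OF K r Cons.prems(3-6) Cons.prems(7,8)] .
  have n2: "\<forall>z\<in>adj K r. R3 p3 p2 p1 p0 z \<noteq> 0"
  proof -
    have "- p2 \<in> K" "p1 * p3 - 4 * p0 \<in> K" "- (p1^2 + p0 * p3^2 - 4 * p0 * p2) \<in> K"
    proof -
      have four: "4 \<in> K" using subfieldD(2,3)[OF K] by (metis numeral_Bit0 one_add_one)
      show "- p2 \<in> K" using subfieldD(5)[OF K] Cons.prems(4) by simp
      show "p1 * p3 - 4 * p0 \<in> K" using subfieldD(4)[OF K] subfield_diff[OF K] Cons.prems four by simp
      show "- (p1^2 + p0 * p3^2 - 4 * p0 * p2) \<in> K"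
        using subfieldD(3,4,5)[OF K] subfield_diff[OF K] subfield_power[OF K] Cons.prems four by simp
    qed
    then show ?thesis using cubic_adj[OF K r] Cons.prems(8) unfolding R3_def by blast
  qed
  show ?case using Cons.IH[OF subfield_adj[OF K r] v] sub Cons.prems(3-6) n1 n2 by auto
qed

lemma H4_nonzero:
  fixes a b :: int
  assumes "coprime a b"
  shows "a^4 + 14 * a^3 * b + 30 * a^2 * b^2 - 202 * a * b^3 - 475 * b^4 \<noteq> 0"
proof
  assume h: "a^4 + 14 * a^3 * b + 30 * a^2 * b^2 - 202 * a * b^3 - 475 * b^4 = 0"
  have ca: "[a = a mod 3] (mod 3)" and cb: "[b = b mod 3] (mod 3)" by (simp_all add: cong_def)
  have "[a^4 + 14 * a^3 * b + 30 * a^2 * b^2 - 202 * a * b^3 - 475 * b^4 =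
        (a mod 3)^4 + 14 * (a mod 3)^3 * (b mod 3) + 30 * (a mod 3)^2 * (b mod 3)^2
          - 202 * (a mod 3) * (b mod 3)^3 - 475 * (b mod 3)^4] (mod 3)"
    by (intro cong_add cong_diff cong_mult cong_pow cong_refl ca cb)
  then have m: "((a mod 3)^4 + 14 * (a mod 3)^3 * (b mod 3) + 30 * (a mod 3)^2 * (b mod 3)^2
          - 202 * (a mod 3) * (b mod 3)^3 - 475 * (b mod 3)^4) mod 3 = 0"
    using h by (simp add: cong_def)
  have "a mod 3 = 0 \<or> a mod 3 = 1 \<or> a mod 3 = 2" by arith
  moreover have "b mod 3 = 0 \<or> b mod 3 = 1 \<or> b mod 3 = 2" by arith
  moreover have "\<not> (a mod 3 = 0 \<and> b mod 3 = 0)"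
  proof
    assume "a mod 3 = 0 \<and> b mod 3 = 0"
    then have "(3::int) dvd a" "(3::int) dvd b" by auto
    then have "is_unit (3::int)" using assms coprime_common_divisor by blast
    then show False by simp
  qed
  ultimately show False using m by auto
qed

lemma H3_nonzero:
  fixes a b :: int
  assumes "coprime a b"
  shows "a^3 - 30 * a^2 * b - 928 * a * b^2 - 4704 * b^3 \<noteq> 0"
proof
  assume h: "a^3 - 30 * a^2 * b - 928 * a * b^2 - 4704 * b^3 = 0"
  have ca: "[a = a mod 5] (mod 5)" and cb: "[b = b mod 5] (mod 5)" by (simp_all add: cong_def)
  have "[a^3 - 30 * a^2 * b - 928 * a * b^2 - 4704 * b^3 =
        (a mod 5)^3 - 30 * (a mod 5)^2 * (b mod 5) - 928 * (a mod 5) * (b mod 5)^2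
          - 4704 * (b mod 5)^3] (mod 5)"
    by (intro cong_add cong_diff cong_mult cong_pow cong_refl ca cb)
  then have m: "((a mod 5)^3 - 30 * (a mod 5)^2 * (b mod 5) - 928 * (a mod 5) * (b mod 5)^2
          - 4704 * (b mod 5)^3) mod 5 = 0"
    using h by (simp add: cong_def)
  have "a mod 5 = 0 \<or> a mod 5 = 1 \<or> a mod 5 = 2 \<or> a mod 5 = 3 \<or> a mod 5 = 4" by arith
  moreover have "b mod 5 = 0 \<or> b mod 5 = 1 \<or> b mod 5 = 2 \<or> b mod 5 = 3 \<or> b mod 5 = 4" by arith
  moreover have "\<not> (a mod 5 = 0 \<and> b mod 5 = 0)"
  proof
    assume "a mod 5 = 0 \<and> b mod 5 = 0"
    then have "(5::int) dvd a" "(5::int) dvd b" by auto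
    then have "is_unit (5::int)" using assms coprime_common_divisor by blast
    then show False by simp
  qed
  ultimately show False using m by auto
qed

lemma rat_P4: "(q::rat)^4 + 14 * q^3 + 30 * q^2 - 202 * q - 475 \<noteq> 0"
proof (cases q)
  case (Fract a b)
  have qe: "q = of_int a / of_int b" using Fract by (simp add: Fract_of_int_quotient)
  have b0: "(of_int b :: rat) \<noteq> 0" using Fract by simp
  define y where "y = (of_int b :: rat)"
  have x: "of_int a = q * y" unfolding qe y_def using b0 by simp
  have "y^4 * (q^4 + 14 * q^3 + 30 * q^2 - 202 * q - 475) = (q*y)^4 + 14 * (q*y)^3 * y + 30 * (q*y)^2 * y^2 - 202 * (q*y) * y^3 - 475 * y^4"
    by algebra
  also have "\<dots> = of_int (a^4 + 14 * a^3 * b + 30 * a^2 * b^2 - 202 * a * b^3 - 475 * b^4)"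
    unfolding y_def by (simp add: x[unfolded y_def])
  finally have eq: "y^4 * (q^4 + 14 * q^3 + 30 * q^2 - 202 * q - 475) = of_int (a^4 + 14 * a^3 * b + 30 * a^2 * b^2 - 202 * a * b^3 - 475 * b^4)" .
  show ?thesis
  proof
    assume "q^4 + 14 * q^3 + 30 * q^2 - 202 * q - 475 = 0"
    then have "(of_int (a^4 + 14 * a^3 * b + 30 * a^2 * b^2 - 202 * a * b^3 - 475 * b^4) :: rat) = 0"
      using eq by simp
    then have "a^4 + 14 * a^3 * b + 30 * a^2 * b^2 - 202 * a * b^3 - 475 * b^4 = 0"
      by (simp only: of_int_eq_0_iff)
    then show False using H4_nonzero[OF Fract(3)] by simp
  qed
qed

lemma rat_P3: "(q::rat)^3 - 30 * q^2 - 928 * q - 4704 \<noteq> 0"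
proof (cases q)
  case (Fract a b)
  have qe: "q = of_int a / of_int b" using Fract by (simp add: Fract_of_int_quotient)
  have b0: "(of_int b :: rat) \<noteq> 0" using Fract by simp
  define y where "y = (of_int b :: rat)"
  have x: "of_int a = q * y" unfolding qe y_def using b0 by simp
  have "y^3 * (q^3 - 30 * q^2 - 928 * q - 4704) = (q*y)^3 - 30 * (q*y)^2 * y - 928 * (q*y) * y^2 - 4704 * y^3"
    by algebra
  also have "\<dots> = of_int (a^3 - 30 * a^2 * b - 928 * a * b^2 - 4704 * b^3)"
    unfolding y_def by (simp add: x[unfolded y_def])
  finally have eq: "y^3 * (q^3 - 30 * q^2 - 928 * q - 4704) = of_int (a^3 - 30 * a^2 * b - 928 * a * b^2 - 4704 * b^3)" .
  show ?thesis
  proof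
    assume "q^3 - 30 * q^2 - 928 * q - 4704 = 0"
    then have "(of_int (a^3 - 30 * a^2 * b - 928 * a * b^2 - 4704 * b^3) :: rat) = 0"
      using eq by simp
    then have "a^3 - 30 * a^2 * b - 928 * a * b^2 - 4704 * b^3 = 0"
      by (simp only: of_int_eq_0_iff)
    then show False using H3_nonzero[OF Fract(3)] by simp
  qed
qed

lemma subfield_Rats: "subfield (\<rat> :: complex set)"
  unfolding subfield_def by auto

definition QE :: "complex set" where
  "QE = {z. \<exists>rs. valid \<rat> rs \<and> z \<in> tw \<rat> rs}"

lemma QE_common:
  assumes "z \<in> QE" "w \<in> QE"
  shows "\<exists>rs. valid \<rat> rs \<and> z \<in> tw \<rat> rs \<and> w \<in> tw \<rat> rs"
proof -
  obtain ps where ps: "valid \<rat> ps" "z \<in> tw \<rat> ps" using assms(1) unfolding QE_def by blast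
  obtain qs where qs: "valid \<rat> qs" "w \<in> tw \<rat> qs" using assms(2) unfolding QE_def by blast
  have sub: "\<rat> \<subseteq> tw \<rat> ps" using subset_tw[OF subfield_Rats ps(1)] .
  have v: "valid \<rat> (ps @ qs)" unfolding valid_append using ps(1) valid_mono[OF sub qs(1)] by simp
  have "z \<in> tw \<rat> (ps @ qs)" unfolding tw_append
    using subset_tw[OF subfield_tw[OF subfield_Rats ps(1)] valid_mono[OF sub qs(1)]] ps(2) by blast
  moreover have "w \<in> tw \<rat> (ps @ qs)" unfolding tw_append using tw_mono[OF sub] qs(2) by blast
  ultimately show ?thesis using v by blast
qed

lemma QE_binop:
  assumes "z \<in> QE" "w \<in> QE"
  shows "z + w \<in> QE" "z * w \<in> QE"
proof -
  obtain rs where rs: "valid \<rat> rs" "z \<in> tw \<rat> rs" "w \<in> tw \<rat> rs" using QE_common[OF assms] by blast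
  have S: "subfield (tw \<rat> rs)" using subfield_tw[OF subfield_Rats rs(1)] .
  show "z + w \<in> QE" using subfieldD(3)[OF S rs(2,3)] rs(1) unfolding QE_def by blast
  show "z * w \<in> QE" using subfieldD(4)[OF S rs(2,3)] rs(1) unfolding QE_def by blast
qed

lemma QE_unop:
  assumes "z \<in> QE"
  shows "- z \<in> QE" "inverse z \<in> QE"
proof -
  obtain rs where rs: "valid \<rat> rs" "z \<in> tw \<rat> rs" using assms unfolding QE_def by blast
  have S: "subfield (tw \<rat> rs)" using subfield_tw[OF subfield_Rats rs(1)] .
  show "- z \<in> QE" using subfieldD(5)[OF S rs(2)] rs(1) unfolding QE_def by blast
  show "inverse z \<in> QE" using subfieldD(6)[OF S rs(2)] rs(1) unfolding QE_def by blast
qed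

lemma QE_Rats: "z \<in> \<rat> \<Longrightarrow> z \<in> QE"
  unfolding QE_def by (rule CollectI, rule exI[of _ "[]"]) simp

lemma QE_diff: "z \<in> QE \<Longrightarrow> w \<in> QE \<Longrightarrow> z - w \<in> QE"
  using QE_binop(1)[of z "- w"] QE_unop(1)[of w] by simp

lemma QE_divide: "z \<in> QE \<Longrightarrow> w \<in> QE \<Longrightarrow> z / w \<in> QE"
  using QE_binop(2)[of z "inverse w"] QE_unop(2)[of w] by (simp add: divide_inverse)

lemma QE_sqrt:
  assumes "r * r \<in> QE"
  shows "r \<in> QE"
proof -
  obtain rs where rs: "valid \<rat> rs" "r * r \<in> tw \<rat> rs" using assms unfolding QE_def by blast
  have S: "subfield (tw \<rat> rs)" using subfield_tw[OF subfield_Rats rs(1)] .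
  have "valid \<rat> (rs @ [r])" unfolding valid_append using rs by simp
  moreover have "r \<in> tw \<rat> (rs @ [r])" unfolding tw_append using r_in_adj[OF S] by simp
  ultimately show ?thesis unfolding QE_def by blast
qed

lemma cnj_adj: "cnj ` adj K r = adj (cnj ` K) (cnj r)"
proof
  show "cnj ` adj K r \<subseteq> adj (cnj ` K) (cnj r)"
  proof
    fix z assume "z \<in> cnj ` adj K r"
    then obtain x y where xy: "x \<in> K" "y \<in> K" "z = cnj (x + y * r)" unfolding adj_def by blast
    then have "z = cnj x + cnj y * cnj r" by simp
    then show "z \<in> adj (cnj ` K) (cnj r)" unfolding adj_def using xy by blast
  qed
next
  show "adj (cnj ` K) (cnj r) \<subseteq> cnj ` adj K r"
  proof
    fix z assume "z \<in> adj (cnj ` K) (cnj r)"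
    then obtain x y where xy: "x \<in> K" "y \<in> K" "z = cnj x + cnj y * cnj r" unfolding adj_def by blast
    then have "z = cnj (x + y * r)" by simp
    moreover have "x + y * r \<in> adj K r" unfolding adj_def using xy by blast
    ultimately show "z \<in> cnj ` adj K r" by blast
  qed
qed

lemma tw_cnj: "cnj ` tw K rs = tw (cnj ` K) (map cnj rs)"
  by (induction rs arbitrary: K) (auto simp: cnj_adj)

lemma valid_cnj: "valid K rs \<Longrightarrow> valid (cnj ` K) (map cnj rs)"
proof (induction rs arbitrary: K)
  case Nil then show ?case by simp
next
  case (Cons r rs)
  have "cnj r * cnj r \<in> cnj ` K" using Cons.prems by (metis complex_cnj_mult image_eqI valid.simps(2))
  moreover have "valid (cnj ` adj K r) (map cnj rs)" using Cons.IH Cons.prems by simp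
  ultimately show ?case by (simp add: cnj_adj)
qed

lemma cnj_Rats: "cnj ` (\<rat> :: complex set) = \<rat>"
proof -
  have c: "cnj z = z" if "z \<in> \<rat>" for z :: complex
    using that by (rule Rats_cases') simp
  show ?thesis
  proof
    show "cnj ` \<rat> \<subseteq> \<rat>" using c by auto
    show "\<rat> \<subseteq> cnj ` \<rat>" using c by (metis image_eqI subsetI)
  qed
qed

lemma QE_cnj: "z \<in> QE \<Longrightarrow> cnj z \<in> QE"
proof -
  assume "z \<in> QE"
  then obtain rs where rs: "valid \<rat> rs" "z \<in> tw \<rat> rs" unfolding QE_def by blast
  have "cnj z \<in> tw (cnj ` \<rat>) (map cnj rs)" using rs(2) tw_cnj by blast
  moreover have "valid (cnj ` \<rat>) (map cnj rs)" using valid_cnj[OF rs(1)] .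
  ultimately show ?thesis unfolding QE_def cnj_Rats by blast
qed

lemma QE_ii: "\<i> \<in> QE"
  using QE_sqrt[of \<i>] QE_Rats[of "-1"] by simp

lemma QE_noroot:
  assumes "z \<in> QE"
  shows "z^4 + 14 * z^3 + 30 * z^2 - 202 * z - 475 \<noteq> 0"
proof -
  obtain rs where rs: "valid \<rat> rs" "z \<in> tw \<rat> rs" using assms unfolding QE_def by blast
  have b1: "\<forall>z\<in>\<rat>. P4 14 30 (- 202) (- 475) z \<noteq> 0"
  proof
    fix z :: complex assume "z \<in> \<rat>"
    then obtain q where q: "z = of_rat q" by (auto elim: Rats_cases)
    have "P4 14 30 (- 202) (- 475) z = of_rat (q^4 + 14 * q^3 + 30 * q^2 - 202 * q - 475)"
      unfolding q P4_def by (simp add: of_rat_add of_rat_mult of_rat_power of_rat_diff)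
    then show "P4 14 30 (- 202) (- 475) z \<noteq> 0" using rat_P4[of q] by simp
  qed
  have b2: "\<forall>z\<in>\<rat>. R3 14 30 (- 202) (- 475) z \<noteq> 0"
  proof
    fix z :: complex assume "z \<in> \<rat>"
    then obtain q where q: "z = of_rat q" by (auto elim: Rats_cases)
    have "R3 14 30 (- 202) (- 475) z = of_rat (q^3 - 30 * q^2 - 928 * q - 4704)"
      unfolding q R3_def P3_def by (simp add: of_rat_add of_rat_mult of_rat_power of_rat_diff)
    then show "R3 14 30 (- 202) (- 475) z \<noteq> 0" using rat_P3[of q] by simp
  qed
  have "P4 14 30 (- 202) (- 475) z \<noteq> 0"
    using tower_noroot[OF subfield_Rats rs(1) _ _ _ _ b1 b2] rs(2)
    by auto
  then show ?thesis unfolding P4_def by simp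
qed

definition QR :: "real \<Rightarrow> bool" where "QR x \<longleftrightarrow> complex_of_real x \<in> QE"

lemma QE_numeral: "numeral n \<in> QE" using QE_Rats by simp

lemma QR_ops:
  assumes "QR x" "QR y"
  shows "QR (x + y)" "QR (x - y)" "QR (x * y)" "QR (x / y)" "QR (- x)"
proof -
  have a: "complex_of_real x \<in> QE" and b: "complex_of_real y \<in> QE" using assms unfolding QR_def by auto
  show "QR (x + y)" unfolding QR_def using QE_binop(1)[OF a b] by simp
  show "QR (x - y)" unfolding QR_def using QE_diff[OF a b] by simp
  show "QR (x * y)" unfolding QR_def using QE_binop(2)[OF a b] by simp
  show "QR (x / y)" unfolding QR_def using QE_divide[OF a b] by simp
  show "QR (- x)" unfolding QR_def using QE_unop(1)[OF a] by simp
qed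

lemma QR_numeral: "QR (numeral n)" unfolding QR_def using QE_numeral by simp
lemma QR_0: "QR 0" unfolding QR_def using QE_Rats by simp
lemma QR_1: "QR 1" unfolding QR_def using QE_Rats by simp

lemma QR_Re: "z \<in> QE \<Longrightarrow> QR (Re z)"
proof -
  assume z: "z \<in> QE"
  have "complex_of_real (Re z) = (z + cnj z) / 2" by (simp add: complex_add_cnj)
  then show ?thesis unfolding QR_def using z QE_cnj QE_binop QE_divide QE_numeral by metis
qed

lemma QR_Im: "z \<in> QE \<Longrightarrow> QR (Im z)"
proof -
  assume z: "z \<in> QE"
  have "complex_of_real (Im z) = (z - cnj z) / (2 * \<i>)" by (simp add: complex_eq_iff)
  then show ?thesis unfolding QR_def using z QE_cnj QE_binop QE_diff QE_divide QE_numeral QE_ii by metis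
qed

lemma QR_sqrt: "QR (x * x) \<Longrightarrow> QR x"
  unfolding QR_def using QE_sqrt[of "complex_of_real x"] by simp

lemma QE_of_QR: "QR x \<Longrightarrow> QR y \<Longrightarrow> Complex x y \<in> QE"
proof -
  assume "QR x" "QR y"
  have "Complex x y = complex_of_real x + \<i> * complex_of_real y" by (simp add: complex_eq_iff)
  then show ?thesis using \<open>QR x\<close> \<open>QR y\<close> QE_ii QE_binop unfolding QR_def by metis
qed

lemma QE_iff: "z \<in> QE \<longleftrightarrow> QR (Re z) \<and> QR (Im z)"
  using QR_Re QR_Im QE_of_QR[of "Re z" "Im z"] by auto

lemma QR_quad:
  assumes "QR A" "QR B" "QR C" "A \<noteq> 0" "A * t^2 + B * t + C = 0"
  shows "QR t"
proof -
  have "(2 * A * t + B) * (2 * A * t + B) = 4 * A * (A * t^2 + B * t + C) + (B * B - 4 * A * C)"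
    by (simp add: algebra_simps power2_eq_square)
  then have "(2 * A * t + B) * (2 * A * t + B) = B * B - 4 * A * C" using assms(5) by simp
  then have "QR ((2 * A * t + B) * (2 * A * t + B))"
    using assms(1-3) QR_ops QR_numeral by metis
  then have "QR (2 * A * t + B)" by (rule QR_sqrt)
  then have "QR ((2 * A * t + B - B) / (2 * A))" using assms QR_ops QR_numeral by metis
  moreover have "(2 * A * t + B - B) / (2 * A) = t" using assms(4) by simp
  ultimately show ?thesis by simp
qed

lemma cross_self: "Im (cnj v * v) = 0"
  by (simp add: algebra_simps)

lemma par_real:
  assumes "u \<noteq> 0" "Im (cnj v * u) = 0"
  shows "v = complex_of_real (Re (v / u)) * u"
proof -
  have "Im (v / u) = 0"
    using assms by (simp add: Im_divide algebra_simps)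
  then have "v / u = complex_of_real (Re (v / u))" by (simp add: complex_eq_iff)
  then show ?thesis using assms(1) by (metis nonzero_eq_divide_eq)
qed

lemma line_line_QE:
  assumes QE: "a \<in> QE" "b \<in> QE" "c \<in> QE" "d \<in> QE"
    and ne: "a \<noteq> b" "c \<noteq> d" and lne: "line_through a b \<noteq> line_through c d"
    and z1: "z \<in> line_through a b" and z2: "z \<in> line_through c d"
  shows "z \<in> QE"
proof -
  define u where "u = b - a"
  define v where "v = d - c"
  obtain t where t: "z = a + complex_of_real t * u" using z1 unfolding line_through_def u_def by blast
  obtain s where s: "z = c + complex_of_real s * v" using z2 unfolding line_through_def v_def by blast
  have u0: "u \<noteq> 0" "v \<noteq> 0" using ne u_def v_def by auto
  have key: "t * Im (cnj v * u) = Im (cnj v * (c - a))"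
  proof -
    have "complex_of_real t * u = c - a + complex_of_real s * v" using t s by (simp add: algebra_simps)
    then have "Im (cnj v * (complex_of_real t * u)) = Im (cnj v * (c - a + complex_of_real s * v))" by simp
    then show ?thesis by (simp add: algebra_simps)
  qed
  show ?thesis
  proof (cases "Im (cnj v * u) = 0")
    case False
    have "QR (Im (cnj v * (c - a)) / Im (cnj v * u))"
      using QR_ops(4) QR_Im QE QE_binop QE_cnj QE_diff u_def v_def by metis
    moreover have "t = Im (cnj v * (c - a)) / Im (cnj v * u)" using key False by (simp add: field_simps)
    ultimately have "QR t" by simp
    then show ?thesis unfolding t QR_def using QE QE_binop QE_diff u_def by metis
  next
    case True
    define k where "k = Re (v / u)"
    have vk: "v = complex_of_real k * u" using par_real[OF u0(1) True] k_def by simp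
    have k0: "k \<noteq> 0" using vk u0 by auto
    have "line_through a b = line_through c d"
    proof
      show "line_through c d \<subseteq> line_through a b"
      proof
        fix w assume "w \<in> line_through c d"
        then obtain s' where "w = c + complex_of_real s' * v" unfolding line_through_def v_def by blast
        then have "w = a + complex_of_real (t - s * k + s' * k) * u" using t s vk
          by (simp add: algebra_simps)
        then show "w \<in> line_through a b" unfolding line_through_def u_def by blast
      qed
    next
      show "line_through a b \<subseteq> line_through c d"
      proof
        fix w assume "w \<in> line_through a b"
        then obtain t' where "w = a + complex_of_real t' * u" unfolding line_through_def u_def by blast
        have cv: "complex_of_real r * u = complex_of_real (r / k) * v" for r
          unfolding vk using k0 by (simp add: field_simps)
        have "w = c + complex_of_real (s * k + t' - t) * u" using t s vk \<open>w = a + complex_of_real t' * u\<close>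
          by (simp add: algebra_simps)
        then have "w = c + complex_of_real ((s * k + t' - t) / k) * v" using cv[of "s * k + t' - t"] by (simp only:)
        then show "w \<in> line_through c d" unfolding line_through_def v_def by blast
      qed
    qed
    then show ?thesis using lne by simp
  qed
qed

lemma QR_norm2: "z \<in> QE \<Longrightarrow> QR (cmod z ^ 2)"
proof -
  assume z: "z \<in> QE"
  have "cmod z ^ 2 = Re z * Re z + Im z * Im z" unfolding cmod_power2 by (simp add: power2_eq_square)
  then show ?thesis using QR_Re[OF z] QR_Im[OF z] QR_ops by metis
qed

lemma norm2_expand: "cmod (w + complex_of_real t * u) ^ 2 = cmod w ^ 2 + 2 * t * Re (cnj u * w) + t^2 * cmod u ^ 2"
  unfolding cmod_power2 by (simp add: algebra_simps power2_eq_square)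

lemma norm2_expand2: "cmod (w - e) ^ 2 = cmod w ^ 2 - 2 * Re (cnj e * w) + cmod e ^ 2"
  unfolding cmod_power2 by (simp add: algebra_simps power2_eq_square)

lemma line_circle_QE:
  assumes QE: "a \<in> QE" "b \<in> QE" "c \<in> QE" "r \<in> QE"
    and ne: "a \<noteq> b"
    and z1: "z \<in> line_through a b" and z2: "z \<in> circle_through c r"
  shows "z \<in> QE"
proof -
  define u where "u = b - a"
  define w where "w = a - c"
  obtain t where t: "z = a + complex_of_real t * u" using z1 unfolding line_through_def u_def by blast
  have u0: "u \<noteq> 0" using ne u_def by auto
  have "dist z c = dist r c" using z2 unfolding circle_through_def by simp
  then have "cmod (z - c) ^ 2 = cmod (r - c) ^ 2" by (simp add: dist_norm)
  moreover have "z - c = w + complex_of_real t * u" using t w_def by simp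
  ultimately have eq: "cmod (w + complex_of_real t * u) ^ 2 = cmod (r - c) ^ 2" by simp
  have "cmod u ^ 2 * t^2 + (2 * Re (cnj u * w)) * t + (cmod w ^ 2 - cmod (r - c) ^ 2) = 0"
    using eq unfolding norm2_expand by (simp add: algebra_simps)
  moreover have "QR (cmod u ^ 2)" "QR (2 * Re (cnj u * w))" "QR (cmod w ^ 2 - cmod (r - c) ^ 2)"
    using QR_norm2 QR_Re QR_ops QR_numeral QE QE_binop QE_cnj QE_diff u_def w_def by metis+
  moreover have "cmod u ^ 2 \<noteq> 0" using u0 by simp
  ultimately have "QR t" using QR_quad by blast
  then show ?thesis unfolding t QR_def using QE QE_binop QE_diff u_def by metis
qed

lemma circle_circle_QE:
  assumes QE: "c1 \<in> QE" "r1 \<in> QE" "c2 \<in> QE" "r2 \<in> QE"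
    and cne: "circle_through c1 r1 \<noteq> circle_through c2 r2"
    and z1: "z \<in> circle_through c1 r1" and z2: "z \<in> circle_through c2 r2"
  shows "z \<in> QE"
proof -
  have d1: "dist z c1 = dist r1 c1" and d2: "dist z c2 = dist r2 c2"
    using z1 z2 unfolding circle_through_def by auto
  have e0: "c2 \<noteq> c1"
  proof
    assume "c2 = c1"
    then have "circle_through c1 r1 = circle_through c2 r2"
      using d1 d2 unfolding circle_through_def by auto
    then show False using cne by simp
  qed
  define e where "e = c2 - c1"
  define w where "w = z - c1"
  have eQ: "e \<in> QE" using QE QE_diff e_def by auto
  have e00: "e \<noteq> 0" using e0 e_def by simp
  have R1: "cmod w ^ 2 = cmod (r1 - c1) ^ 2" using d1 w_def by (simp add: dist_norm)
  have R2: "cmod (w - e) ^ 2 = cmod (r2 - c2) ^ 2" using d2 w_def e_def by (simp add: dist_norm)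
  define u where "u = cnj e * w"
  have Reu: "Re u = (cmod (r1 - c1) ^ 2 + cmod e ^ 2 - cmod (r2 - c2) ^ 2) / 2"
    using R2 R1 unfolding norm2_expand2 u_def by simp
  have QRe: "QR (Re u)" unfolding Reu using QR_norm2 QR_ops QR_numeral QE QE_diff eQ by metis
  have "Im u * Im u = cmod u ^ 2 - Re u * Re u" unfolding cmod_power2 by (simp add: power2_eq_square)
  also have "cmod u ^ 2 = cmod e ^ 2 * cmod (r1 - c1) ^ 2"
    unfolding u_def using R1 by (simp add: norm_mult power_mult_distrib)
  finally have "Im u * Im u = cmod e ^ 2 * cmod (r1 - c1) ^ 2 - Re u * Re u" .
  then have "QR (Im u * Im u)" using QR_norm2 QR_ops QRe QE QE_diff eQ by metis
  then have "QR (Im u)" by (rule QR_sqrt)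
  then have uQ: "u \<in> QE" using QRe QE_iff by blast
  have "w = u / cnj e" using e00 u_def by simp
  then have "w \<in> QE" using uQ QE_divide QE_cnj eQ by metis
  moreover have "z = w + c1" using w_def by simp
  ultimately show ?thesis using QE QE_binop by metis
qed

lemma constructible_QE:
  assumes "S \<subseteq> QE"
  shows "constructible S \<subseteq> QE"
proof
  fix z assume "z \<in> constructible S"
  then show "z \<in> QE"
  proof (induction rule: constructible.induct)
    case (base z) then show ?case using assms by blast
  next
    case (line_line a b c d z) then show ?case using line_line_QE by blast
  next
    case (line_circle a b c r z) then show ?case using line_circle_QE by blast
  next
    case (circle_circle c1 r1 c2 r2 z) then show ?case using circle_circle_QE by blast
  qed
qed

lemma cs_ratio: "\<bar>(x \<bullet> y) / (norm x * norm y)\<bar> \<le> (1::real)"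
proof (cases "norm x * norm y = 0")
  case True then show ?thesis by (metis abs_zero div_by_0 zero_le_one)
next
  case False
  then have pos: "norm x * norm y > 0" by (simp add: less_le)
  have "\<bar>x \<bullet> y\<bar> \<le> norm x * norm y" by (rule Cauchy_Schwarz_ineq2)
  then show ?thesis using pos by (simp add: abs_divide divide_le_eq_1)
qed

lemma noncol_uv:
  fixes P Q R :: complex
  assumes "\<not> collinear {P, Q, R}"
  shows "\<not> collinear {0, Q - P, R - P}"
proof -
  have "{P, Q, R} = {Q, P, R}" by auto
  then show ?thesis using assms collinear_3[of Q P R] by simp
qed

lemma bis_forward:
  fixes P Q R X :: complex
  assumes nc: "\<not> collinear {P, Q, R}" and seg: "X \<in> closed_segment Q R"
    and ang: "angle Q P X = angle X P R"
  shows "(norm (R - P) + norm (Q - P)) *\<^sub>R X = norm (R - P) *\<^sub>R Q + norm (Q - P) *\<^sub>R R"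
proof -
  obtain t where t: "0 \<le> t" "t \<le> 1" "X = (1 - t) *\<^sub>R Q + t *\<^sub>R R"
    using seg unfolding closed_segment_def by auto
  define u where "u = Q - P"
  define v where "v = R - P"
  define w where "w = X - P"
  have w_eq: "w = (1 - t) *\<^sub>R u + t *\<^sub>R v"
    unfolding u_def v_def w_def t(3) by (simp add: algebra_simps)
  have ncol: "\<not> collinear {0, u, v}" using noncol_uv[OF nc] u_def v_def by simp
  have u0: "u \<noteq> 0" and v0: "v \<noteq> 0" using ncol collinear_lemma[of u v] by auto
  have strict: "\<bar>u \<bullet> v\<bar> < norm u * norm v"
    using Cauchy_Schwarz_ineq2[of u v] norm_cauchy_schwarz_equal[of u v] ncol by linarith
  have w0: "w \<noteq> 0"
  proof
    assume "w = 0"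
    then have tv: "t *\<^sub>R v = (t - 1) *\<^sub>R u" using w_eq by (simp add: algebra_simps eq_neg_iff_add_eq_0)
    have "t \<noteq> 0" using \<open>w = 0\<close> w_eq u0 by auto
    have "v = (1 / t) *\<^sub>R (t *\<^sub>R v)" using \<open>t \<noteq> 0\<close> by simp
    also have "\<dots> = ((t - 1) / t) *\<^sub>R u" unfolding tv by simp
    finally have "v = ((t - 1) / t) *\<^sub>R u" .
    then have "collinear {0, u, v}" using collinear_lemma by blast
    then show False using ncol by simp
  qed
  have "(u \<bullet> w) / (norm u * norm w) = (w \<bullet> v) / (norm w * norm v)"
    using ang unfolding angle_def vangle_def u_def v_def w_def
    using arccos_eq_iff cs_ratio by blast
  then have eq: "(u \<bullet> w) * norm v = (w \<bullet> v) * norm u"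
    using u0 v0 w0 by (simp add: field_simps)
  define b where "b = norm v"
  define c where "c = norm u"
  define m where "m = u \<bullet> v"
  have uu: "u \<bullet> u = c^2" unfolding c_def by (simp add: power2_norm_eq_inner)
  have vv: "v \<bullet> v = b^2" unfolding b_def by (simp add: power2_norm_eq_inner)
  have uw: "u \<bullet> w = (1 - t) * c^2 + t * m" unfolding w_eq m_def
    by (simp add: inner_add_right uu)
  have wv: "w \<bullet> v = (1 - t) * m + t * b^2" unfolding w_eq m_def
    by (simp add: inner_add_left inner_add_right vv inner_commute)
  have "((1 - t) * c - t * b) * (b * c - m) = 0"
    using eq unfolding uw wv b_def[symmetric] c_def[symmetric] by (simp add: algebra_simps power2_eq_square)
  moreover have "b * c - m \<noteq> 0"
  proof -
    have "m < c * b" using strict abs_ge_self[of m] unfolding b_def c_def m_def by linarith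
    then show ?thesis by (simp add: algebra_simps)
  qed
  ultimately have key: "(1 - t) * c = t * b" by simp
  have e1: "(b + c) * (1 - t) = b" and e2: "(b + c) * t = c" using key by (simp_all add: algebra_simps)
  have "(b + c) *\<^sub>R X = ((b + c) * (1 - t)) *\<^sub>R Q + ((b + c) * t) *\<^sub>R R"
    unfolding t(3) by (simp add: algebra_simps)
  also have "\<dots> = b *\<^sub>R Q + c *\<^sub>R R" unfolding e1 e2 ..
  finally show ?thesis unfolding b_def c_def u_def v_def .
qed

lemma bis_backward:
  fixes P Q R X :: complex
  assumes b: "b = norm (R - P)" and c: "c = norm (Q - P)" and pos: "b > 0" "c > 0"
    and X: "X = (b / (b + c)) *\<^sub>R Q + (c / (b + c)) *\<^sub>R R"
  shows "X \<in> closed_segment Q R" "angle Q P X = angle X P R"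
proof -
  have t1: "1 - c / (b + c) = b / (b + c)" using pos by (simp add: field_simps)
  show "X \<in> closed_segment Q R" unfolding closed_segment_def
    using pos t1 X by (intro CollectI exI[of _ "c / (b + c)"]) (auto simp: field_simps)
  define u where "u = Q - P"
  define v where "v = R - P"
  define w where "w = X - P"
  define m where "m = u \<bullet> v"
  have w_eq: "w = (b / (b + c)) *\<^sub>R u + (c / (b + c)) *\<^sub>R v"
  proof -
    have "w = (b / (b + c)) *\<^sub>R Q + (c / (b + c)) *\<^sub>R R - (b / (b + c) + c / (b + c)) *\<^sub>R P"
      using pos unfolding w_def X by (simp add: add_divide_distrib[symmetric])
    then show ?thesis unfolding u_def v_def by (simp add: algebra_simps)
  qed
  have uu: "u \<bullet> u = c^2" unfolding c u_def by (simp add: power2_norm_eq_inner)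
  have vv: "v \<bullet> v = b^2" unfolding b v_def by (simp add: power2_norm_eq_inner)
  have uw: "u \<bullet> w = (b / (b + c)) * c^2 + (c / (b + c)) * m" unfolding w_eq m_def
    by (simp add: inner_add_right uu)
  have wv: "w \<bullet> v = (b / (b + c)) * m + (c / (b + c)) * b^2" unfolding w_eq m_def
    by (simp add: inner_add_left inner_add_right vv inner_commute)
  have "(u \<bullet> w) / (norm u * norm w) = (w \<bullet> v) / (norm w * norm v)"
  proof (cases "norm w = 0")
    case True then show ?thesis by simp
  next
    case False
    have nu: "norm u = c" and nv: "norm v = b" using b c u_def v_def by auto
    have bc: "b + c \<noteq> 0" using pos by simp
    have "u \<bullet> w = (b * c^2 + c * m) / (b + c)" unfolding uw by (simp add: add_divide_distrib)
    also have "\<dots> = c * ((b * c + m) / (b + c))" by (simp add: power2_eq_square algebra_simps)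
    finally have uw2: "u \<bullet> w = c * ((b * c + m) / (b + c))" .
    have "w \<bullet> v = (b * m + c * b^2) / (b + c)" unfolding wv by (simp add: add_divide_distrib)
    also have "\<dots> = b * ((b * c + m) / (b + c))" by (simp add: power2_eq_square algebra_simps)
    finally have wv2: "w \<bullet> v = b * ((b * c + m) / (b + c))" .
    show ?thesis unfolding uw2 wv2 nu nv using False pos by simp
  qed
  then show "angle Q P X = angle X P R"
    unfolding angle_def vangle_def u_def v_def w_def by simp
qed

lemma collinear_cross:
  fixes p q r :: complex
  assumes "collinear {p, q, r}"
  shows "Im (cnj (q - p) * (r - p)) = 0"
proof -
  obtain e where e: "\<forall>x\<in>{p, q, r}. \<forall>y\<in>{p, q, r}. \<exists>c. x - y = c *\<^sub>R e"
    using assms unfolding collinear_def by blast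
  obtain c1 where c1: "q - p = c1 *\<^sub>R e" using e by blast
  obtain c2 where c2: "r - p = c2 *\<^sub>R e" using e by blast
  show ?thesis unfolding c1 c2 by (simp add: scaleR_conv_of_real algebra_simps)
qed

lemma cert:
  fixes a b c :: real
  shows "(48550*c^6 + 64150*b*c^5 + 71400*b^2*c^4 + 99757*a*c^5 + 146946*a*b*c^4 + 155014*a*b^2*c^3 - 13136*a*b^3*c^2 - 39456*a*b^4*c - 22137*a^2*c^4 + 58596*a^2*b*c^3 + 19038*a^2*b^2*c^2 - 21776*a^2*b^3*c - 39456*a^2*b^4 - 145032*a^3*c^3 - 42580*a^3*b*c^2 - 35398*a^3*b^2*c - 8640*a^3*b^3 - 28438*a^4*c^2 - 20810*a^4*b*c + 29178*a^4*b^2 + 45275*a^5*c - 2430*a^5*b + 2025*a^6) * ((a+c)^2*((2*a+b-c)^2+(a+b)^2) - (b+c)^2*((2*a+b+c)^2+(a+b)^2))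
    + (- 59375*c^6 - 53800*b*c^5 - 56200*b^2*c^4 - 17850*b^3*c^3 - 129550*a*c^5 - 120142*a*b*c^4 - 82993*a*b^2*c^3 - 10432*a*b^3*c^2 + 25478*a*b^4*c + 9864*a*b^5 + 29183*a^2*c^4 - 23852*a^2*b*c^3 + 23675*a^2*b^2*c^2 + 35382*a^2*b^3*c + 19422*a^2*b^4 + 164291*a^3*c^3 + 65954*a^3*b*c^2 + 909*a^3*b^2*c - 5364*a^3*b^3 + 8222*a^4*c^2 - 25047*a^4*b^2 - 38255*a^5*c) * ((a+b)^2*((2*a-b+c)^2+(a-b)^2) - (b+c)^2*((2*a+b+c)^2+(a+b)^2))
    = 125 * (a+c)^3 * (a-c)^3 * (81*a^4+378*a^3*c+270*a^2*c^2-606*a*c^3-475*c^4)"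
  by algebra

lemma cmod_sq: "cmod z ^ 2 = Re z ^ 2 + Im z ^ 2"
  by (simp add: cmod_power2)

lemma impossible:
  fixes A' B' C' :: complex
  assumes bf: "bisector_feet A' B' C' 0 1 (Complex (-1) 1)"
    and QA: "A' \<in> QE" and QB: "B' \<in> QE" and QC: "C' \<in> QE"
  shows False
proof -
  define a where "a = cmod (B' - C')"
  define b where "b = cmod (C' - A')"
  define c where "c = cmod (A' - B')"
  have bfs: "is_triangle A' B' C'" "0 \<in> closed_segment B' C'" "angle B' A' 0 = angle 0 A' C'"
    "1 \<in> closed_segment C' A'" "angle C' B' 1 = angle 1 B' A'"
    "Complex (-1) 1 \<in> closed_segment A' B'" "angle A' C' (Complex (-1) 1) = angle (Complex (-1) 1) C' B'"
    using bf unfolding bisector_feet_def by blast+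
  have nc: "\<not> collinear {A', B', C'}" using bfs(1) unfolding is_triangle_def .
  have s2: "{B', C', A'} = {A', B', C'}" by blast
  have s3: "{C', A', B'} = {A', B', C'}" by blast
  have nc2: "\<not> collinear {B', C', A'}" unfolding s2 by (rule nc)
  have nc3: "\<not> collinear {C', A', B'}" unfolding s3 by (rule nc)
  have dAB: "A' \<noteq> B'" using nc collinear_2[of A' C'] by (metis insert_absorb2 insert_commute)
  have dBC: "B' \<noteq> C'" using nc collinear_2[of A' B'] by (metis insert_absorb2 insert_commute)
  have dCA: "C' \<noteq> A'" using nc collinear_2[of A' B'] by (metis insert_absorb2 insert_commute)
  have apos: "a > 0" unfolding a_def using dBC by simp
  have bpos: "b > 0" unfolding b_def using dCA by simp
  have cpos: "c > 0" unfolding c_def using dAB by simp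
  have na: "norm (C' - B') = a" unfolding a_def by (rule norm_minus_commute)
  have nb: "norm (A' - C') = b" unfolding b_def by (rule norm_minus_commute)
  have nc': "norm (B' - A') = c" unfolding c_def by (rule norm_minus_commute)
  have r1: "(b + c) *\<^sub>R (0::complex) = b *\<^sub>R B' + c *\<^sub>R C'"
    using bis_forward[OF nc bfs(2,3)] unfolding nc' b_def[symmetric] .
  have r2: "(c + a) *\<^sub>R (1::complex) = c *\<^sub>R C' + a *\<^sub>R A'"
    using bis_forward[OF nc2 bfs(4,5)] unfolding na c_def[symmetric] .
  have r3: "(a + b) *\<^sub>R Complex (-1) 1 = a *\<^sub>R A' + b *\<^sub>R B'"
    using bis_forward[OF nc3 bfs(6,7)] unfolding nb a_def[symmetric] .
  define \<alpha> where "\<alpha> = complex_of_real a"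
  define \<beta> where "\<beta> = complex_of_real b"
  define \<gamma> where "\<gamma> = complex_of_real c"
  define I where "I = Complex (-1) 1"
  have e1: "\<beta> * B' + \<gamma> * C' = 0" using r1 unfolding \<beta>_def \<gamma>_def by (simp add: scaleR_conv_of_real)
  have e2: "\<gamma> * C' + \<alpha> * A' = \<gamma> + \<alpha>" using r2 unfolding \<alpha>_def \<gamma>_def by (simp add: scaleR_conv_of_real)
  have e3: "\<alpha> * A' + \<beta> * B' = (\<alpha> + \<beta>) * I" using r3 unfolding \<alpha>_def \<beta>_def I_def by (simp add: scaleR_conv_of_real)
  define X where "X = (\<alpha> + \<beta>) * I - (\<gamma> + \<alpha>)"
  define Z where "Z = (\<gamma> + \<alpha>) + (\<alpha> + \<beta>) * I"
  have h1: "2 * \<beta> * \<gamma> * (B' - C') = (\<beta> + \<gamma>) * X"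
    using e1 e2 e3 unfolding X_def by algebra
  have h2: "2 * \<alpha> * \<gamma> * (C' - A') = - (\<alpha> * X + \<gamma> * Z)"
    using e1 e2 e3 unfolding X_def Z_def by algebra
  have h3: "2 * \<alpha> * \<beta> * (A' - B') = \<beta> * Z - \<alpha> * X"
    using e1 e2 e3 unfolding X_def Z_def by algebra
  have K1: "(2 * b * c * a)^2 = (b+c)^2*((2*a+b+c)^2+(a+b)^2)"
  proof -
    have "cmod (2 * \<beta> * \<gamma> * (B' - C')) = 2 * b * c * a"
      unfolding \<beta>_def \<gamma>_def a_def using bpos cpos by (simp add: norm_mult)
    moreover have "cmod ((\<beta> + \<gamma>) * X) ^ 2 = (b+c)^2*((2*a+b+c)^2+(a+b)^2)"
      unfolding norm_mult power_mult_distrib cmod_sq X_def \<alpha>_def \<beta>_def \<gamma>_def I_def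
      by (simp add: power2_eq_square algebra_simps)
    ultimately show ?thesis using h1 by simp
  qed
  have K2: "(2 * a * c * b)^2 = (a+c)^2*((2*a+b-c)^2+(a+b)^2)"
  proof -
    have "cmod (2 * \<alpha> * \<gamma> * (C' - A')) = 2 * a * c * b"
      unfolding \<alpha>_def \<gamma>_def b_def using apos cpos by (simp add: norm_mult)
    moreover have "cmod (- (\<alpha> * X + \<gamma> * Z)) ^ 2 = (a+c)^2*((2*a+b-c)^2+(a+b)^2)"
      unfolding norm_minus_cancel cmod_sq X_def Z_def \<alpha>_def \<beta>_def \<gamma>_def I_def
      by (simp add: power2_eq_square algebra_simps)
    ultimately show ?thesis using h2 by simp
  qed
  have K3: "(2 * a * b * c)^2 = (a+b)^2*((2*a-b+c)^2+(a-b)^2)"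
  proof -
    have "cmod (2 * \<alpha> * \<beta> * (A' - B')) = 2 * a * b * c"
      unfolding \<alpha>_def \<beta>_def c_def using apos bpos by (simp add: norm_mult)
    moreover have "cmod (\<beta> * Z - \<alpha> * X) ^ 2 = (a+b)^2*((2*a-b+c)^2+(a-b)^2)"
      unfolding cmod_sq X_def Z_def \<alpha>_def \<beta>_def \<gamma>_def I_def
      by (simp add: power2_eq_square algebra_simps)
    ultimately show ?thesis using h3 by simp
  qed
  have g1: "(a+c)^2*((2*a+b-c)^2+(a+b)^2) - (b+c)^2*((2*a+b+c)^2+(a+b)^2) = 0"
    using K1 K2 by (simp add: algebra_simps)
  have g2: "(a+b)^2*((2*a-b+c)^2+(a-b)^2) - (b+c)^2*((2*a+b+c)^2+(a+b)^2) = 0"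
    using K1 K3 by (simp add: algebra_simps)
  have prod: "125 * (a+c)^3 * (a-c)^3 * (81*a^4+378*a^3*c+270*a^2*c^2-606*a*c^3-475*c^4) = 0"
    using cert[where a=a and b=b and c=c] g1 g2 by simp
  have ac: "a \<noteq> c"
  proof
    assume "a = c"
    then have "(a+b)^2 * (2*a^2 + 8*a*b + 2*b^2) = 0" using g1
      by (simp add: algebra_simps power2_eq_square)
    moreover have "(a+b)^2 * (2*a^2 + 8*a*b + 2*b^2) > 0" using apos bpos by (simp add: add_pos_pos)
    ultimately show False by linarith
  qed
  have Q4: "81*a^4+378*a^3*c+270*a^2*c^2-606*a*c^3-475*c^4 = 0"
    using prod ac apos cpos by simp
  define z where "z = 3 * \<alpha> / \<gamma>"
  have QRa: "QR a"
    using QR_sqrt QR_norm2[OF QE_diff[OF QB QC]] unfolding a_def power2_eq_square by blast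
  have QRc: "QR c"
    using QR_sqrt QR_norm2[OF QE_diff[OF QA QB]] unfolding c_def power2_eq_square by blast
  have zQ: "z \<in> QE" unfolding z_def \<alpha>_def \<gamma>_def using QRa QRc QR_ops QR_numeral
    unfolding QR_def by (metis of_real_divide of_real_mult of_real_numeral)
  have g0: "\<gamma> \<noteq> 0" unfolding \<gamma>_def using cpos by simp
  have zc: "z * \<gamma> = 3 * \<alpha>" unfolding z_def using g0 by simp
  have "\<gamma>^4 * (z^4 + 14 * z^3 + 30 * z^2 - 202 * z - 475) =
     (z*\<gamma>)^4 + 14 * (z*\<gamma>)^3 * \<gamma> + 30 * (z*\<gamma>)^2 * \<gamma>^2 - 202 * (z*\<gamma>) * \<gamma>^3 - 475 * \<gamma>^4"
    by algebra
  also have "\<dots> = complex_of_real (81*a^4+378*a^3*c+270*a^2*c^2-606*a*c^3-475*c^4)"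
    unfolding zc unfolding \<alpha>_def \<gamma>_def by (simp add: power_mult_distrib)
  also have "\<dots> = 0" using Q4 by simp
  finally have "z^4 + 14 * z^3 + 30 * z^2 - 202 * z - 475 = 0" using g0 by simp
  then show False using QE_noroot[OF zQ] by simp
qed

lemma witness:
  fixes a b c :: real
  assumes pos: "a > 0" "b > 0" "c > 0"
    and k12: "(b+c)^2*((2*a+b+c)^2+(a+b)^2) = (a+c)^2*((2*a+b-c)^2+(a+b)^2)"
    and k13: "(b+c)^2*((2*a+b+c)^2+(a+b)^2) = (a+b)^2*((2*a-b+c)^2+(a-b)^2)"
  shows "bisector_feet (Complex ((c - b) / (2 * a)) ((a + b) / (2 * a)))
                       (Complex (- (2 * a + b + c) / (2 * b)) ((a + b) / (2 * b)))
                       (Complex ((2 * a + b + c) / (2 * c)) (- (a + b) / (2 * c)))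
                       0 1 (Complex (-1) 1)"
proof -
  define A' where "A' = Complex ((c - b) / (2 * a)) ((a + b) / (2 * a))"
  define B' where "B' = Complex (- (2 * a + b + c) / (2 * b)) ((a + b) / (2 * b))"
  define C' where "C' = Complex ((2 * a + b + c) / (2 * c)) (- (a + b) / (2 * c))"
  define K where "K = (b+c)^2*((2*a+b+c)^2+(a+b)^2)"
  have Kpos: "K > 0" unfolding K_def using pos by (intro mult_pos_pos) (auto intro: add_pos_nonneg)
  define s where "s = sqrt K / (2 * a * b * c)"
  have spos: "s > 0" unfolding s_def using Kpos pos by simp
  have s2: "s^2 = K / (4 * a^2 * b^2 * c^2)" unfolding s_def using Kpos pos
    by (simp add: power_divide power_mult_distrib)
  have n1: "cmod (B' - C') = s * a"
  proof (rule power_eq_imp_eq_base[of _ 2])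
    have "cmod (B' - C') ^ 2 = ((2*a+b+c)^2+(a+b)^2) * ((b + c) / (2 * b * c))^2"
      unfolding cmod_sq B'_def C'_def using pos by (simp add: field_simps power2_eq_square)
    also have "\<dots> = (s * a)^2" unfolding power_mult_distrib s2 K_def using pos
      by (simp add: field_simps power2_eq_square)
    finally show "cmod (B' - C') ^ 2 = (s * a)^2" .
  qed (use spos pos in auto)
  have n2: "cmod (C' - A') = s * b"
  proof (rule power_eq_imp_eq_base[of _ 2])
    have "cmod (C' - A') ^ 2 = ((2*a+b-c)^2+(a+b)^2) * ((a + c) / (2 * a * c))^2"
      unfolding cmod_sq A'_def C'_def using pos by (simp add: field_simps power2_eq_square)
    also have "\<dots> = (s * b)^2" unfolding power_mult_distrib s2 K_def k12 using pos
      by (simp add: field_simps power2_eq_square)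
    finally show "cmod (C' - A') ^ 2 = (s * b)^2" .
  qed (use spos pos in auto)
  have n3: "cmod (A' - B') = s * c"
  proof (rule power_eq_imp_eq_base[of _ 2])
    have "cmod (A' - B') ^ 2 = ((2*a-b+c)^2+(a-b)^2) * ((a + b) / (2 * a * b))^2"
      unfolding cmod_sq A'_def B'_def using pos by (simp add: field_simps power2_eq_square)
    also have "\<dots> = (s * c)^2" unfolding power_mult_distrib s2 K_def k13 using pos
      by (simp add: field_simps power2_eq_square)
    finally show "cmod (A' - B') ^ 2 = (s * c)^2" .
  qed (use spos pos in auto)
  have tri: "is_triangle A' B' C'"
  proof -
    have "Im (cnj (B' - A') * (C' - A')) = (a+b)*(a+c)*(b+c)/(2*a*b*c)"
      unfolding A'_def B'_def C'_def using pos by (simp add: field_simps)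
    moreover have "(a+b)*(a+c)*(b+c)/(2*a*b*c) > 0" using pos by simp
    ultimately show ?thesis unfolding is_triangle_def using collinear_cross by fastforce
  qed
  have nz: "b + c \<noteq> 0" "c + a \<noteq> 0" "a + b \<noteq> 0" "a \<noteq> 0" "b \<noteq> 0" "c \<noteq> 0" using pos by auto
  have sc: "(s*x) / ((s*x) + (s*y)) = x / (x + y)" for x y
    using spos by (simp add: distrib_left[symmetric])
  have canc: "x / d * (w / (2 * x)) = w / (2 * d)" if "x \<noteq> 0" for x d w :: real
    using that by (simp add: field_simps)
  have fA: "(0::complex) = (b / (b + c)) *\<^sub>R B' + (c / (b + c)) *\<^sub>R C'"
    unfolding A'_def B'_def C'_def using nz by (simp add: complex_eq_iff canc add_divide_distrib[symmetric])
  have fB: "(1::complex) = (c / (c + a)) *\<^sub>R C' + (a / (c + a)) *\<^sub>R A'"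
    unfolding A'_def B'_def C'_def using nz by (simp add: complex_eq_iff canc add_divide_distrib[symmetric])
  have fC: "Complex (-1) 1 = (a / (a + b)) *\<^sub>R A' + (b / (a + b)) *\<^sub>R B'"
  proof -
    have d: "a * 2 + b * 2 > 0" using pos by simp
    show ?thesis unfolding A'_def B'_def C'_def using nz d
      by (simp add: complex_eq_iff canc add_divide_distrib[symmetric] eq_divide_eq)
  qed
  have sc2: "(s*y) / ((s*x) + (s*y)) = y / (x + y)" for x y
    using spos by (simp add: distrib_left[symmetric])
  have fA': "(0::complex) = ((s*b) / ((s*b) + (s*c))) *\<^sub>R B' + ((s*c) / ((s*b) + (s*c))) *\<^sub>R C'"
    unfolding sc sc2 by (rule fA)
  have fB': "(1::complex) = ((s*c) / ((s*c) + (s*a))) *\<^sub>R C' + ((s*a) / ((s*c) + (s*a))) *\<^sub>R A'"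
    unfolding sc sc2 by (rule fB)
  have fC': "Complex (-1) 1 = ((s*a) / ((s*a) + (s*b))) *\<^sub>R A' + ((s*b) / ((s*a) + (s*b))) *\<^sub>R B'"
    unfolding sc sc2 by (rule fC)
  have m1: "s * b = norm (C' - A')" "s * c = norm (B' - A')" using n2 n3 by (simp_all add: norm_minus_commute)
  have m2: "s * c = norm (A' - B')" "s * a = norm (C' - B')" using n1 n3 by (simp_all add: norm_minus_commute)
  have m3: "s * a = norm (B' - C')" "s * b = norm (A' - C')" using n1 n2 by (simp_all add: norm_minus_commute)
  have ps: "s * a > 0" "s * b > 0" "s * c > 0" using spos pos by simp_all
  note bA = bis_backward[OF m1 ps(2,3) fA']
  note bB = bis_backward[OF m2 ps(3,1) fB']
  note bC = bis_backward[OF m3 ps(1,2) fC']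
  show ?thesis unfolding A'_def[symmetric] B'_def[symmetric] C'_def[symmetric] bisector_feet_def
    using tri bA bB bC by blast
qed

lemma root_exists: "\<exists>u::real. 3.58 \<le> u \<and> u \<le> 3.6 \<and> u^4 + 14 * u^3 + 30 * u^2 - 202 * u - 475 = 0"
proof -
  define f where "f = (\<lambda>u::real. u^4 + 14 * u^3 + 30 * u^2 - 202 * u - 475)"
  have "f 3.58 \<le> 0" "0 \<le> f 3.6" unfolding f_def by (simp_all add: power_numeral_reduce)
  moreover have "\<forall>x. 3.58 \<le> x \<and> x \<le> 3.6 \<longrightarrow> isCont f x" unfolding f_def by (intro allI impI continuous_intros)
  ultimately show ?thesis using IVT[of f "3.58" 0 "3.6"] unfolding f_def by auto
qed

theorem mainTheorem1:
  shows "\<exists>A B C :: complex. is_triangle A B C \<and>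
           (\<exists>A' B' C'. bisector_feet A' B' C' A B C) \<and>
           \<not> (\<exists>A' B' C'. bisector_feet A' B' C' A B C \<and>
                 A' \<in> constructible {A, B, C} \<and> B' \<in> constructible {A, B, C} \<and>
                 C' \<in> constructible {A, B, C})"
proof -
  have h1: "is_triangle 0 1 (Complex (-1) 1)"
  proof -
    have "Im (cnj (1 - 0) * (Complex (-1) 1 - 0)) \<noteq> 0" by simp
    then show ?thesis unfolding is_triangle_def using collinear_cross by blast
  qed
  have h2: "\<exists>A' B' C'. bisector_feet A' B' C' 0 1 (Complex (-1) 1)"
  proof -
    obtain u :: real where u: "3.58 \<le> u" "u \<le> 3.6" and fu: "u^4 + 14 * u^3 + 30 * u^2 - 202 * u - 475 = 0"
      using root_exists by blast
    define b where "b = (67 + 15 * u - 5 * u^2 - u^3) / 16"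
    have b16: "16 * b = 67 + 15 * u - 5 * u^2 - u^3" unfolding b_def by simp
    have u2: "u^2 \<le> 3.6^2" using u by (intro power_mono) auto
    have u3: "u^3 \<le> 3.6^3" using u by (intro power_mono) auto
    have bpos: "b > 0" unfolding b_def using u u2 u3 by (simp add: power_numeral_reduce)
    have upos: "u > 0" using u by simp
    have k12: "(b+3)^2*((2*u+b+3)^2+(u+b)^2) = (u+3)^2*((2*u+b-3)^2+(u+b)^2)"
      using fu b16 by algebra
    have k13: "(b+3)^2*((2*u+b+3)^2+(u+b)^2) = (u+b)^2*((2*u-b+3)^2+(u-b)^2)"
      using fu b16 by algebra
    show ?thesis using witness[OF upos bpos _ k12 k13] by auto
  qed
  have h3: "\<not> (\<exists>A' B' C'. bisector_feet A' B' C' 0 1 (Complex (-1) 1) \<and>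
                 A' \<in> constructible {0, 1, Complex (-1) 1} \<and> B' \<in> constructible {0, 1, Complex (-1) 1} \<and>
                 C' \<in> constructible {0, 1, Complex (-1) 1})"
  proof
    assume "\<exists>A' B' C'. bisector_feet A' B' C' 0 1 (Complex (-1) 1) \<and>
                 A' \<in> constructible {0, 1, Complex (-1) 1} \<and> B' \<in> constructible {0, 1, Complex (-1) 1} \<and>
                 C' \<in> constructible {0, 1, Complex (-1) 1}"
    then obtain A' B' C' where bf: "bisector_feet A' B' C' 0 1 (Complex (-1) 1)"
      and c: "A' \<in> constructible {0, 1, Complex (-1) 1}" "B' \<in> constructible {0, 1, Complex (-1) 1}"
         "C' \<in> constructible {0, 1, Complex (-1) 1}" by blast
    have "Complex (-1) 1 = -1 + \<i>" by (simp add: complex_eq_iff)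
    then have "Complex (-1) 1 \<in> QE" using QE_binop(1)[OF QE_Rats[of "-1"] QE_ii] by simp
    then have "{0, 1, Complex (-1) 1} \<subseteq> QE" using QE_Rats[of 0] QE_Rats[of 1] by simp
    then have "constructible {0, 1, Complex (-1) 1} \<subseteq> QE" by (rule constructible_QE)
    then show False using impossible[OF bf] c by blast
  qed
  show ?thesis using h1 h2 h3 by blast
qed

end
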